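(* Let $H$ be a separable Hilbert space with orthonormal basis $\{e_n:n=0,1,2,\ldots\}$. For $n\geq 0$ let $L_n=\mathrm{Span}\{e_k:0\leq k\leq n\}$ and put $L_{-1}=\{0\}$. Let \[ H_{\mathrm{ra}}=\{x\in H: \sup_{n\geq 0} n^k d(x,L_{n-1})<\infty \text{ for all } k=0,1,2,\ldots\}, \] where $0^0=1$ and $d(x,L_{n-1})$ is the distance from $x$ to $L_{n-1}$. For $k\geq 0$ define $q_k(x)=\sup_{n\geq 0} n^k d(x,L_{n-1})$ for $x\in H_{\mathrm{ra}}$. Then $\{q_k:k=0,1,2,\ldots\}$ is a separating family of seminorms on $H_{\mathrm{ra}}$ inducing a Fréchet topology on $H_{\mathrm{ra}}$. Moreover, $x=\sum_{n=0}^\infty a_n(x)e_n\in H$ lies in $H_{\mathrm{ra}}$ if and only if $(a_n(x))_{n\geq 0}\in(s)$, and the map $x\mapsto (a_n(x))_{n\geq 0}$ is a topological isomorphism between the Fréchet spaces $H_{\mathrm{ra}}$ and $(s)$.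
   Context: $(s)$ denotes the space of rapidly decreasing sequences, i.e. complex sequences $(a_n)_{n\geq 0}$ with $\sup_n n^k|a_n|<\infty$ for all $k\geq 0$, with the Fréchet topology induced by the seminorms $(a_n)\mapsto\sup_n n^k|a_n|$, $k=0,1,2,\ldots$. *)

theory Defs
  imports "HOL-Analysis.Analysis" "HOL-Library.Function_Algebras"
begin

(* A complex Hilbert space is encoded as a real Hilbert space (type class
   real_inner + complete_space) together with a complex structure J
   (multiplication by the imaginary unit): J is real-linear, J (J x) = -x,
   and J is orthogonal. *)
definition complex_structure :: "('a::real_inner \<Rightarrow> 'a) \<Rightarrow> bool" where
  "complex_structure J \<longleftrightarrow> linear J \<and> (\<forall>x. J (J x) = - x)
      \<and> (\<forall>x y. inner (J x) (J y) = inner x y)"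

definition cscale :: "('a::real_inner \<Rightarrow> 'a) \<Rightarrow> complex \<Rightarrow> 'a \<Rightarrow> 'a" where
  "cscale J c x = Re c *\<^sub>R x + Im c *\<^sub>R J x"

(* complex inner product, linear in the first argument *)
definition cinner :: "('a::real_inner \<Rightarrow> 'a) \<Rightarrow> 'a \<Rightarrow> 'a \<Rightarrow> complex" where
  "cinner J x y = Complex (inner x y) (inner x (J y))"

definition cspan :: "('a::real_inner \<Rightarrow> 'a) \<Rightarrow> 'a set \<Rightarrow> 'a set" where
  "cspan J A = span (A \<union> J ` A)"

definition orthonormal_basis :: "('a::real_inner \<Rightarrow> 'a) \<Rightarrow> (nat \<Rightarrow> 'a) \<Rightarrow> bool" where
  "orthonormal_basis J e \<longleftrightarrow>
     (\<forall>i j. cinner J (e i) (e j) = (if i = j then 1 else 0))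
     \<and> closure (cspan J (range e)) = UNIV"

(* Lspan J e n = L_{n-1} = Span{e_k : k < n}; in particular Lspan J e 0 = {0} = L_{-1} *)
definition Lspan :: "('a::real_inner \<Rightarrow> 'a) \<Rightarrow> (nat \<Rightarrow> 'a) \<Rightarrow> nat \<Rightarrow> 'a set" where
  "Lspan J e n = cspan J (e ` {..<n})"

definition H_ra :: "('a::real_inner \<Rightarrow> 'a) \<Rightarrow> (nat \<Rightarrow> 'a) \<Rightarrow> 'a set" where
  "H_ra J e = {x. \<forall>k::nat. bdd_above (range (\<lambda>n::nat. real n ^ k * infdist x (Lspan J e n)))}"

(* q_k(x) = sup_n n^k d(x, L_{n-1})   (real 0 ^ 0 = 1) *)
definition qsem :: "('a::real_inner \<Rightarrow> 'a) \<Rightarrow> (nat \<Rightarrow> 'a) \<Rightarrow> nat \<Rightarrow> 'a \<Rightarrow> real" where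
  "qsem J e k x = (SUP n::nat. real n ^ k * infdist x (Lspan J e n))"

definition fourier_coeffs :: "('a::real_inner \<Rightarrow> 'a) \<Rightarrow> (nat \<Rightarrow> 'a) \<Rightarrow> 'a \<Rightarrow> nat \<Rightarrow> complex" where
  "fourier_coeffs J e x = (\<lambda>n. cinner J x (e n))"

definition rapid_seq :: "(nat \<Rightarrow> complex) set" where
  "rapid_seq = {a. \<forall>k::nat. bdd_above (range (\<lambda>n::nat. real n ^ k * cmod (a n)))}"

definition ssem :: "nat \<Rightarrow> (nat \<Rightarrow> complex) \<Rightarrow> real" where
  "ssem k a = (SUP n::nat. real n ^ k * cmod (a n))"

definition seq_scale :: "complex \<Rightarrow> (nat \<Rightarrow> complex) \<Rightarrow> nat \<Rightarrow> complex" where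
  "seq_scale c a = (\<lambda>n. c * a n)"

definition seminorm_on :: "'v::ab_group_add set \<Rightarrow> (complex \<Rightarrow> 'v \<Rightarrow> 'v) \<Rightarrow> ('v \<Rightarrow> real) \<Rightarrow> bool" where
  "seminorm_on S smul p \<longleftrightarrow> 0 \<in> S
     \<and> (\<forall>x\<in>S. \<forall>y\<in>S. x + y \<in> S \<and> p (x + y) \<le> p x + p y)
     \<and> (\<forall>c. \<forall>x\<in>S. smul c x \<in> S \<and> p (smul c x) = cmod c * p x)"

(* (p k)_k is a separating family of seminorms on S inducing a Frechet topology,
   i.e. the induced (metrizable, locally convex) topology is complete:
   every sequence which is Cauchy for all p k converges for all p k to a point of S *)
definition frechet_seminorms :: "'v::ab_group_add set \<Rightarrow> (complex \<Rightarrow> 'v \<Rightarrow> 'v) \<Rightarrow> (nat \<Rightarrow> 'v \<Rightarrow> real) \<Rightarrow> bool" where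
  "frechet_seminorms S smul p \<longleftrightarrow>
     (\<forall>k. seminorm_on S smul (p k))
     \<and> (\<forall>x\<in>S. (\<forall>k. p k x = 0) \<longrightarrow> x = 0)
     \<and> (\<forall>X. (\<forall>n. X n \<in> S) \<and>
            (\<forall>k. \<forall>\<epsilon>>0. \<exists>N. \<forall>m\<ge>N. \<forall>n\<ge>N. p k (X m - X n) < \<epsilon>)
          \<longrightarrow> (\<exists>y\<in>S. \<forall>k. (\<lambda>n. p k (X n - y)) \<longlonglongrightarrow> 0))"

definition seminorm_topology :: "'v::ab_group_add set \<Rightarrow> (nat \<Rightarrow> 'v \<Rightarrow> real) \<Rightarrow> 'v topology" where
  "seminorm_topology S p = topology_generated_by
     {{y \<in> S. p k (y - x) < r} | k x r. x \<in> S \<and> r > 0}"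

end

theory Submission
  imports Defs
begin


locale hb =
  fixes J :: "'a::{real_inner, complete_space} \<Rightarrow> 'a" and e :: "nat \<Rightarrow> 'a"
  assumes cs: "complex_structure J" and ob: "orthonormal_basis J e"
begin

lemma J_lin: "linear J" using cs by (simp add: complex_structure_def)
lemma J_J[simp]: "J (J x) = - x" using cs by (simp add: complex_structure_def)
lemma J_inner[simp]: "inner (J x) (J y) = inner x y" using cs by (simp add: complex_structure_def)
lemma J_add[simp]: "J (x + y) = J x + J y" using J_lin by (simp add: linear_add)
lemma J_scale[simp]: "J (r *\<^sub>R x) = r *\<^sub>R J x" using J_lin by (simp add: linear_scale)
lemma J_diff[simp]: "J (x - y) = J x - J y" using J_lin by (simp add: linear_diff)
lemma J_minus[simp]: "J (- x) = - J x" using J_lin by (simp add: linear_neg)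
lemma J_zero[simp]: "J 0 = 0" using J_lin by (simp add: linear_0)
lemma J_sum: "J (sum f A) = (\<Sum>i\<in>A. J (f i))" using J_lin by (simp add: linear_sum)
lemma inner_J_left: "inner (J x) y = - inner x (J y)"
proof -
  have "inner (J x) y = inner (J (J x)) (J y)" by (rule J_inner[symmetric])
  also have "\<dots> = - inner x (J y)" by simp
  finally show ?thesis .
qed
lemma inner_J_self[simp]: "inner x (J x) = 0"
  using inner_J_left[of x x] by (simp add: inner_commute)
lemma norm_J[simp]: "norm (J x) = norm x"
  by (simp add: norm_eq_sqrt_inner)

lemma e_orth1: "inner (e i) (e j) = (if i = j then 1 else 0)"
proof -
  have "cinner J (e i) (e j) = (if i = j then 1 else 0)" using ob by (simp add: orthonormal_basis_def)
  from arg_cong[OF this, of Re] show ?thesis by (simp add: cinner_def split: if_splits)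
qed
lemma e_orth2[simp]: "inner (e i) (J (e j)) = 0"
proof -
  have "cinner J (e i) (e j) = (if i = j then 1 else 0)" using ob by (simp add: orthonormal_basis_def)
  from arg_cong[OF this, of Im] show ?thesis by (simp add: cinner_def split: if_splits)
qed
lemma e_orth3[simp]: "inner (J (e i)) (e j) = 0"
  by (simp add: inner_J_left)
lemma e_orth4: "inner (J (e i)) (J (e j)) = (if i = j then 1 else 0)"
  by (simp add: e_orth1)

definition "P n x = (\<Sum>m<n. inner x (e m) *\<^sub>R e m + inner x (J (e m)) *\<^sub>R J (e m))"
definition "dd n x = infdist x (Lspan J e n)"

lemma Lspan_eq: "Lspan J e n = span (e ` {..<n} \<union> J ` e ` {..<n})"
  by (simp add: Lspan_def cspan_def)

lemma e_in: "m < n \<Longrightarrow> e m \<in> Lspan J e n"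
  unfolding Lspan_eq by (rule span_base) auto
lemma Je_in: "m < n \<Longrightarrow> J (e m) \<in> Lspan J e n"
  unfolding Lspan_eq by (rule span_base) auto

lemma Lspan_mono: "n \<le> N \<Longrightarrow> Lspan J e n \<subseteq> Lspan J e N"
  unfolding Lspan_eq by (rule span_mono) auto

lemma Lspan_0: "Lspan J e 0 = {0}"
  unfolding Lspan_eq by simp

lemma P_in: "P n x \<in> Lspan J e n"
  unfolding P_def Lspan_eq
  by (intro span_sum span_add span_scale span_base) auto

lemma inner_P_e: assumes "m < n" shows "inner (P n x) (e m) = inner x (e m)"
proof -
  have "inner (P n x) (e m) = (\<Sum>ma<n. if ma = m then inner x (e m) else 0)"
    unfolding P_def inner_sum_left by (rule sum.cong) (auto simp: inner_add_left e_orth1)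
  then show ?thesis using assms by simp
qed
lemma inner_P_Je: assumes "m < n" shows "inner (P n x) (J (e m)) = inner x (J (e m))"
proof -
  have "inner (P n x) (J (e m)) = (\<Sum>ma<n. if ma = m then inner x (J (e m)) else 0)"
    unfolding P_def inner_sum_left by (rule sum.cong) (auto simp: inner_add_left e_orth1)
  then show ?thesis using assms by simp
qed

lemma orth_P: assumes "y \<in> Lspan J e n" shows "inner (x - P n x) y = 0"
proof -
  have "orthogonal (x - P n x) y"
    using assms unfolding Lspan_eq
  proof (rule orthogonal_to_span)
    fix z assume "z \<in> e ` {..<n} \<union> J ` e ` {..<n}"
    then obtain m where m: "m < n" "z = e m \<or> z = J (e m)" by blast
    then show "orthogonal (x - P n x) z"
      unfolding orthogonal_def using inner_P_e[OF m(1)] inner_P_Je[OF m(1)]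
      by (auto simp: inner_diff_left)
  qed
  then show ?thesis by (simp add: orthogonal_def)
qed

lemma dd_eq: "dd n x = norm (x - P n x)"
proof (rule antisym)
  show "dd n x \<le> norm (x - P n x)"
    unfolding dd_def using infdist_le[OF P_in[of n x], of x] by (simp only: dist_norm)
next
  have ne: "Lspan J e n \<noteq> {}" using span_zero[of "e ` {..<n} \<union> J ` e ` {..<n}"] by (auto simp: Lspan_eq)
  show "norm (x - P n x) \<le> dd n x"
    unfolding dd_def infdist_notempty[OF ne]
  proof (rule cINF_greatest[OF ne])
    fix y assume y: "y \<in> Lspan J e n"
    have "P n x - y \<in> Lspan J e n"
      using P_in[of n x] y unfolding Lspan_eq by (rule span_diff)
    then have o: "orthogonal (x - P n x) (P n x - y)" using orth_P by (simp add: orthogonal_def)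
    have "(norm (x - y))\<^sup>2 = (norm ((x - P n x) + (P n x - y)))\<^sup>2" by (simp only: add_diff_eq diff_add_cancel)
    also have "\<dots> = (norm (x - P n x))\<^sup>2 + (norm (P n x - y))\<^sup>2" by (rule norm_add_Pythagorean[OF o])
    finally have "(norm (x - P n x))\<^sup>2 \<le> (norm (x - y))\<^sup>2" by (simp only: le_add_same_cancel1 zero_le_power2)
    then show "norm (x - P n x) \<le> dist x y" unfolding dist_norm by (rule power2_le_imp_le) simp
  qed
qed

definition "cf n x = cmod (fourier_coeffs J e x n)"

lemma cf_sq: "(cf n x)\<^sup>2 = (inner x (e n))\<^sup>2 + (inner x (J (e n)))\<^sup>2"
  by (simp add: cf_def fourier_coeffs_def cinner_def cmod_power2)

lemma cf_nonneg: "0 \<le> cf n x" by (simp add: cf_def)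

lemma P_Suc: "P (Suc n) x = P n x + (inner x (e n) *\<^sub>R e n + inner x (J (e n)) *\<^sub>R J (e n))"
  by (simp add: P_def)

lemma dd_nonneg: "0 \<le> dd n x" by (simp add: dd_def infdist_nonneg)

lemma dd_step: "(dd n x)\<^sup>2 = (dd (Suc n) x)\<^sup>2 + (cf n x)\<^sup>2"
proof -
  define w where "w = inner x (e n) *\<^sub>R e n + inner x (J (e n)) *\<^sub>R J (e n)"
  have w_in: "w \<in> Lspan J e (Suc n)"
    unfolding w_def using e_in[of n "Suc n"] Je_in[of n "Suc n"] unfolding Lspan_eq
    by (intro span_add span_scale) auto
  have eq: "x - P n x = (x - P (Suc n) x) + w" by (simp add: P_Suc w_def algebra_simps)
  have o: "orthogonal (x - P (Suc n) x) w" using orth_P[OF w_in] by (simp add: orthogonal_def)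
  have nw: "(norm w)\<^sup>2 = (cf n x)\<^sup>2"
    unfolding cf_sq power2_norm_eq_inner w_def
    by (simp add: inner_add_left inner_add_right e_orth1 power2_eq_square)
  show ?thesis unfolding dd_eq eq norm_add_Pythagorean[OF o] nw ..
qed

lemma cf_le_dd: "cf n x \<le> dd n x"
proof -
  have "(cf n x)\<^sup>2 \<le> (dd n x)\<^sup>2" using dd_step[of n x] by simp
  then show ?thesis using dd_nonneg by (rule power2_le_imp_le)
qed

lemma Lspan_ne: "Lspan J e n \<noteq> {}"
  using span_zero[of "e ` {..<n} \<union> J ` e ` {..<n}"] by (auto simp: Lspan_eq)

lemma dd_mono: "n \<le> N \<Longrightarrow> dd N x \<le> dd n x"
  unfolding dd_def by (rule infdist_mono[OF Lspan_mono Lspan_ne])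

lemma dd_0: "dd 0 x = norm x"
  by (simp add: dd_def Lspan_0 dist_norm)

lemma dd_tel: "(dd n x)\<^sup>2 = (dd (n + j) x)\<^sup>2 + (\<Sum>m\<in>{n..<n+j}. (cf m x)\<^sup>2)"
proof (induction j)
  case 0 then show ?case by simp
next
  case (Suc j)
  then show ?case using dd_step[of "n + j" x] by simp
qed

lemma Lspan_sub: "subspace (Lspan J e n)" by (simp add: Lspan_eq subspace_span)

lemma dd_small: assumes "\<epsilon> > 0" shows "\<exists>N. \<forall>n\<ge>N. dd n x < \<epsilon>"
proof -
  define U where "U = {y. \<exists>N. y \<in> Lspan J e N}"
  have sU: "subspace U"
    unfolding subspace_def U_def
  proof (intro conjI ballI allI; clarsimp?)
    show "\<exists>N. 0 \<in> Lspan J e N" using subspace_0[OF Lspan_sub] by blast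
  next
    fix a b N1 N2 assume a: "a \<in> Lspan J e N1" and b: "b \<in> Lspan J e N2"
    have "a \<in> Lspan J e (max N1 N2)" "b \<in> Lspan J e (max N1 N2)"
      using a b Lspan_mono[of N1 "max N1 N2"] Lspan_mono[of N2 "max N1 N2"] by auto
    then show "\<exists>N. a + b \<in> Lspan J e N" using subspace_add[OF Lspan_sub] by blast
  next
    fix c a N assume a: "a \<in> Lspan J e N"
    then show "\<exists>N. c *\<^sub>R a \<in> Lspan J e N" using subspace_scale[OF Lspan_sub] by blast
  qed
  have gen: "range e \<union> J ` range e \<subseteq> U"
    unfolding U_def using e_in[of _ "Suc _"] Je_in[of _ "Suc _"] by blast
  have cU: "cspan J (range e) \<subseteq> U"
    unfolding cspan_def by (rule span_minimal[OF gen sU])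
  have "x \<in> closure (cspan J (range e))" using ob by (simp add: orthonormal_basis_def)
  then obtain y where y: "y \<in> cspan J (range e)" "dist y x < \<epsilon>"
    using assms closure_approachable by blast
  then obtain N where N: "y \<in> Lspan J e N" using cU U_def by blast
  have "dd N x < \<epsilon>" unfolding dd_def using infdist_le[OF N, of x] y(2) by (simp add: dist_commute)
  then show ?thesis using dd_mono[of N] by (meson le_less_trans)
qed

lemma dd_lim: "(\<lambda>N. dd N x) \<longlonglongrightarrow> 0"
proof (rule LIMSEQ_I)
  fix r :: real assume "0 < r"
  then obtain N where "\<forall>n\<ge>N. dd n x < r" using dd_small by blast
  then show "\<exists>N. \<forall>n\<ge>N. norm (dd n x - 0) < r" using dd_nonneg by auto
qed

lemma main_pos:
  assumes B: "\<forall>m. real m ^ Suc k * cf m x \<le> B" and n: "1 \<le> n"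
  shows "(real n ^ k * dd n x)\<^sup>2 \<le> 2 * B\<^sup>2"
proof -
  have key: "(real n ^ k * dd n x)\<^sup>2 - 2 * B\<^sup>2 \<le> real n ^ (2*k) * (dd (N + n) x)\<^sup>2" for N
  proof -
    have tm: "(real n ^ k)\<^sup>2 * (cf m x)\<^sup>2 \<le> B\<^sup>2 * (1 / (real m)\<^sup>2)" if m: "m \<in> {n..<n+N}" for m
    proof -
      have mn: "real n \<le> real m" "1 \<le> real m" using m n by auto
      have "(real n ^ k)\<^sup>2 * (cf m x)\<^sup>2 \<le> (real m ^ k)\<^sup>2 * (cf m x)\<^sup>2"
        using mn by (intro mult_right_mono power_mono) auto
      also have "\<dots> = (real m ^ Suc k * cf m x)\<^sup>2 / (real m)\<^sup>2"
        using mn by (simp add: field_simps power2_eq_square)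
      also have "\<dots> \<le> B\<^sup>2 / (real m)\<^sup>2"
        using B cf_nonneg[of m x] by (intro divide_right_mono power_mono) auto
      finally show ?thesis by simp
    qed
    have sbound: "(\<Sum>m\<in>{n..<n+N}. 1 / (real m)\<^sup>2) \<le> 2 / real n - 2 / real (n + N)"
    proof (induction N)
      case 0 then show ?case by simp
    next
      case (Suc N)
      define M where "M = real (n + N)"
      have M1: "1 \<le> M" using n by (simp add: M_def)
      have e1: "2 / M - 2 / (M + 1) = (1/M) * (2 / (M + 1))" using M1 by (simp add: field_simps)
      have e2: "1 / M \<le> 2 / (M + 1)" using M1 by (simp add: field_simps)
      have "1 / M\<^sup>2 = (1/M) * (1/M)" by (simp add: power2_eq_square)
      also have "\<dots> \<le> (1/M) * (2 / (M + 1))" using M1 e2 by (intro mult_left_mono) auto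
      finally have "1 / M\<^sup>2 \<le> 2 / M - 2 / (M + 1)" using e1 by simp
      then show ?case using Suc by (simp add: M_def add.commute)
    qed
    have "(real n ^ k * dd n x)\<^sup>2 = (real n ^ k)\<^sup>2 * (dd (n + N) x)\<^sup>2 + (\<Sum>m\<in>{n..<n+N}. (real n ^ k)\<^sup>2 * (cf m x)\<^sup>2)"
      using dd_tel[of n x N] by (simp add: power_mult_distrib sum_distrib_left distrib_left)
    also have "(\<Sum>m\<in>{n..<n+N}. (real n ^ k)\<^sup>2 * (cf m x)\<^sup>2) \<le> (\<Sum>m\<in>{n..<n+N}. B\<^sup>2 * (1 / (real m)\<^sup>2))"
      by (rule sum_mono[OF tm])
    also have "\<dots> = B\<^sup>2 * (\<Sum>m\<in>{n..<n+N}. 1 / (real m)\<^sup>2)" by (simp add: sum_distrib_left)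
    also have "\<dots> \<le> B\<^sup>2 * 2"
    proof -
      have "2 / real n \<le> 2" using n by (simp add: field_simps)
      moreover have "0 \<le> 2 / real (n + N)" by simp
      ultimately have "2 / real n - 2 / real (n + N) \<le> 2" by linarith
      then show ?thesis using sbound by (intro mult_left_mono) auto
    qed
    finally have "(real n ^ k * dd n x)\<^sup>2 \<le> (real n ^ k)\<^sup>2 * (dd (N + n) x)\<^sup>2 + B\<^sup>2 * 2"
      by (simp add: add.commute)
    moreover have "(real n ^ k)\<^sup>2 = real n ^ (2*k)" by (simp add: power_mult[symmetric] mult.commute)
    ultimately show ?thesis by simp
  qed
  have lim: "(\<lambda>N. real n ^ (2*k) * (dd (N + n) x)\<^sup>2) \<longlonglongrightarrow> real n ^ (2*k) * 0\<^sup>2"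
    using LIMSEQ_ignore_initial_segment[OF dd_lim[of x], of n] by (intro tendsto_intros)
  have "(real n ^ k * dd n x)\<^sup>2 - 2 * B\<^sup>2 \<le> real n ^ (2*k) * 0\<^sup>2"
    by (rule LIMSEQ_le_const[OF lim]) (use key in blast)
  then show ?thesis by simp
qed

lemma dd_bound:
  assumes A: "\<forall>m. real m ^ k * cf m x \<le> A" and B: "\<forall>m. real m ^ Suc k * cf m x \<le> B"
  shows "real n ^ k * dd n x \<le> A + 2 * B"
proof -
  have B0: "0 \<le> B" using B[rule_format, of 0] by simp
  have A0: "0 \<le> A" using A[rule_format, of 0] cf_nonneg[of 0 x] by (cases k) auto
  have pos: "real m ^ k * dd m x \<le> 2 * B" if "1 \<le> m" for m
  proof -
    have "(real m ^ k * dd m x)\<^sup>2 \<le> (2 * B)\<^sup>2"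
    proof -
      have "2 * B\<^sup>2 \<le> (2 * B)\<^sup>2" by (simp add: power2_eq_square)
      then show ?thesis using main_pos[OF B that] by linarith
    qed
    then show ?thesis by (rule power2_le_imp_le) (simp add: B0)
  qed
  show ?thesis
  proof (cases "1 \<le> n")
    case True then show ?thesis using pos A0 by force
  next
    case False
    then have n0: "n = 0" by simp
    show ?thesis
    proof (cases k)
      case (Suc k') then show ?thesis using n0 A0 B0 by simp
    next
      case 0
      have d1: "dd 1 x \<le> 2 * B" using pos[of 1] 0 by simp
      have c0: "cf 0 x \<le> A" using A[rule_format, of 0] 0 by simp
      have "(dd 0 x)\<^sup>2 = (dd 1 x)\<^sup>2 + (cf 0 x)\<^sup>2" using dd_step[of 0 x] by simp
      also have "\<dots> \<le> (2*B)\<^sup>2 + A\<^sup>2"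
        using d1 c0 dd_nonneg[of 1 x] cf_nonneg[of 0 x] by (intro add_mono power_mono) auto
      also have "\<dots> \<le> (A + 2 * B)\<^sup>2" using A0 B0 by (simp add: power2_eq_square algebra_simps)
      finally have "(dd 0 x)\<^sup>2 \<le> (A + 2 * B)\<^sup>2" .
      then have "dd 0 x \<le> A + 2 * B" by (rule power2_le_imp_le) (use A0 B0 in simp)
      then show ?thesis using n0 0 by simp
    qed
  qed
qed

lemma fc_add: "fourier_coeffs J e (x + y) = fourier_coeffs J e x + fourier_coeffs J e y"
  by (rule ext) (simp add: fourier_coeffs_def cinner_def inner_add_left complex_eq_iff)
lemma fc_diff: "fourier_coeffs J e (x - y) = fourier_coeffs J e x - fourier_coeffs J e y"
  by (rule ext) (simp add: fourier_coeffs_def cinner_def inner_diff_left complex_eq_iff)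
lemma fc_scale: "fourier_coeffs J e (cscale J c x) = seq_scale c (fourier_coeffs J e x)"
  by (rule ext) (simp add: fourier_coeffs_def cinner_def seq_scale_def cscale_def inner_add_left
      inner_J_left complex_eq_iff)
lemma cf_fc: "cf n x = cmod (fourier_coeffs J e x n)" by (simp add: cf_def)

lemma P_add: "P n (x + y) = P n x + P n y"
  by (simp add: P_def inner_add_left scaleR_add_left sum.distrib algebra_simps)
lemma P_scale: "P n (r *\<^sub>R x) = r *\<^sub>R P n x"
  by (simp add: P_def scaleR_sum_right algebra_simps)
lemma P_J: "J (P n x) = P n (J x)"
  by (simp add: P_def J_sum inner_J_left algebra_simps)
lemma P_diff: "P n (x - y) = P n x - P n y"
  by (simp add: P_def inner_diff_left scaleR_diff_left sum_subtractf algebra_simps)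

lemma norm_cscale: "norm (cscale J c z) = cmod c * norm z"
proof -
  have r: "(cmod c * norm z)\<^sup>2 = ((Re c)\<^sup>2 + (Im c)\<^sup>2) * inner z z"
    by (simp add: power_mult_distrib cmod_power2 power2_norm_eq_inner)
  have "(norm (cscale J c z))\<^sup>2 = (cmod c * norm z)\<^sup>2"
    unfolding r unfolding cscale_def power2_norm_eq_inner
    by (simp add: inner_add_left inner_add_right algebra_simps
        power2_eq_square inner_commute[of "J z" z])
  then show ?thesis by (rule power2_eq_imp_eq) auto
qed

lemma dd_add: "dd n (x + y) \<le> dd n x + dd n y"
proof -
  have "x + y - P n (x + y) = (x - P n x) + (y - P n y)" by (simp add: P_add)
  then show ?thesis unfolding dd_eq by (metis norm_triangle_ineq)
qed
lemma dd_diff: "dd n (x - y) \<le> dd n x + dd n y"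
proof -
  have "x - y - P n (x - y) = (x - P n x) - (y - P n y)" by (simp add: P_diff)
  then show ?thesis unfolding dd_eq by (metis norm_triangle_ineq4)
qed
lemma dd_cscale: "dd n (cscale J c x) = cmod c * dd n x"
proof -
  have "cscale J c x - P n (cscale J c x) = cscale J c (x - P n x)"
    by (simp add: cscale_def P_add P_scale P_J[symmetric] algebra_simps)
  then show ?thesis unfolding dd_eq by (simp add: norm_cscale)
qed
lemma dd_zero: "dd n 0 = 0"
  using dd_eq[of n 0] P_scale[of n 0 0] by simp

lemma bdd_range_iff: "bdd_above (range f) \<longleftrightarrow> (\<exists>M. \<forall>n. f n \<le> M)"
  by (auto simp: bdd_above_def)

lemma Hra_iff: "x \<in> H_ra J e \<longleftrightarrow> (\<forall>k. \<exists>M. \<forall>n. real n ^ k * dd n x \<le> M)"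
  by (simp add: H_ra_def dd_def bdd_range_iff)

lemma rapid_iff: "a \<in> rapid_seq \<longleftrightarrow> (\<forall>k. \<exists>M. \<forall>n. real n ^ k * cmod (a n) \<le> M)"
  by (simp add: rapid_seq_def bdd_range_iff)

lemma char: "x \<in> H_ra J e \<longleftrightarrow> fourier_coeffs J e x \<in> rapid_seq"
proof
  assume x: "x \<in> H_ra J e"
  show "fourier_coeffs J e x \<in> rapid_seq" unfolding rapid_iff
  proof
    fix k
    obtain M where M: "\<forall>n. real n ^ k * dd n x \<le> M" using x Hra_iff by blast
    have "real n ^ k * cmod (fourier_coeffs J e x n) \<le> M" for n
      using M[rule_format, of n] cf_le_dd[of n x] unfolding cf_fc
      by (meson mult_left_mono order_trans zero_le_power of_nat_0_le_iff)
    then show "\<exists>M. \<forall>n. real n ^ k * cmod (fourier_coeffs J e x n) \<le> M" by blast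
  qed
next
  assume a: "fourier_coeffs J e x \<in> rapid_seq"
  show "x \<in> H_ra J e" unfolding Hra_iff
  proof
    fix k
    obtain A where A: "\<forall>n. real n ^ k * cf n x \<le> A" using a rapid_iff cf_fc by metis
    obtain B where B: "\<forall>n. real n ^ Suc k * cf n x \<le> B" using a rapid_iff cf_fc by metis
    show "\<exists>M. \<forall>n. real n ^ k * dd n x \<le> M" using dd_bound[OF A B] by blast
  qed
qed

lemma qsem_dd: "qsem J e k x = (SUP n. real n ^ k * dd n x)" by (simp add: qsem_def dd_def)

lemma qsem_upper: "x \<in> H_ra J e \<Longrightarrow> real n ^ k * dd n x \<le> qsem J e k x"
  unfolding qsem_dd by (rule cSUP_upper) (auto simp: H_ra_def dd_def)
lemma qsem_least: "(\<And>n. real n ^ k * dd n x \<le> M) \<Longrightarrow> qsem J e k x \<le> M"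
  unfolding qsem_dd by (rule cSUP_least) auto
lemma qsem_nonneg: "x \<in> H_ra J e \<Longrightarrow> 0 \<le> qsem J e k x"
  using qsem_upper[of x 1 k] dd_nonneg[of 1 x] by simp

lemma ssem_upper: "a \<in> rapid_seq \<Longrightarrow> real n ^ k * cmod (a n) \<le> ssem k a"
  unfolding ssem_def by (rule cSUP_upper) (auto simp: rapid_seq_def)
lemma ssem_least: "(\<And>n. real n ^ k * cmod (a n) \<le> M) \<Longrightarrow> ssem k a \<le> M"
  unfolding ssem_def by (rule cSUP_least) auto
lemma ssem_nonneg: "a \<in> rapid_seq \<Longrightarrow> 0 \<le> ssem k a"
  using ssem_upper[of a 1 k] by (simp, metis norm_ge_zero order_trans)

lemma ssem_le_qsem: "x \<in> H_ra J e \<Longrightarrow> ssem k (fourier_coeffs J e x) \<le> qsem J e k x"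
proof (rule ssem_least)
  fix n assume x: "x \<in> H_ra J e"
  have "real n ^ k * cmod (fourier_coeffs J e x n) \<le> real n ^ k * dd n x"
    using cf_le_dd[of n x] unfolding cf_fc by (intro mult_left_mono) auto
  then show "real n ^ k * cmod (fourier_coeffs J e x n) \<le> qsem J e k x"
    using qsem_upper[OF x] by (meson order_trans)
qed

lemma qsem_le_ssem: "x \<in> H_ra J e \<Longrightarrow>
   qsem J e k x \<le> ssem k (fourier_coeffs J e x) + 2 * ssem (Suc k) (fourier_coeffs J e x)"
proof (rule qsem_least)
  fix n assume x: "x \<in> H_ra J e"
  then have a: "fourier_coeffs J e x \<in> rapid_seq" using char by simp
  show "real n ^ k * dd n x \<le> ssem k (fourier_coeffs J e x) + 2 * ssem (Suc k) (fourier_coeffs J e x)"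
  proof -
    have A: "\<forall>m. real m ^ k * cf m x \<le> ssem k (fourier_coeffs J e x)"
      unfolding cf_fc using ssem_upper[OF a] by blast
    have B: "\<forall>m. real m ^ Suc k * cf m x \<le> ssem (Suc k) (fourier_coeffs J e x)"
      unfolding cf_fc using ssem_upper[OF a] by blast
    show ?thesis by (rule dd_bound[OF A B])
  qed
qed

lemma nk_nonneg: "0 \<le> real n ^ k" by simp

lemma Hra_0: "0 \<in> H_ra J e" unfolding Hra_iff by (auto simp: dd_zero)

lemma Hra_add: assumes "x \<in> H_ra J e" "y \<in> H_ra J e" shows "x + y \<in> H_ra J e"
  unfolding Hra_iff
proof
  fix k
  obtain M1 M2 where M: "\<forall>n. real n ^ k * dd n x \<le> M1" "\<forall>n. real n ^ k * dd n y \<le> M2"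
    using assms Hra_iff by metis
  have "real n ^ k * dd n (x + y) \<le> M1 + M2" for n
  proof -
    have "real n ^ k * dd n (x + y) \<le> real n ^ k * (dd n x + dd n y)"
      by (rule mult_left_mono[OF dd_add nk_nonneg])
    then show ?thesis using M[THEN spec, of n] by (simp add: distrib_left)
  qed
  then show "\<exists>M. \<forall>n. real n ^ k * dd n (x + y) \<le> M" by blast
qed

lemma Hra_diff: assumes "x \<in> H_ra J e" "y \<in> H_ra J e" shows "x - y \<in> H_ra J e"
  unfolding Hra_iff
proof
  fix k
  obtain M1 M2 where M: "\<forall>n. real n ^ k * dd n x \<le> M1" "\<forall>n. real n ^ k * dd n y \<le> M2"
    using assms Hra_iff by metis
  have "real n ^ k * dd n (x - y) \<le> M1 + M2" for n
  proof -
    have "real n ^ k * dd n (x - y) \<le> real n ^ k * (dd n x + dd n y)"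
      by (rule mult_left_mono[OF dd_diff nk_nonneg])
    then show ?thesis using M[THEN spec, of n] by (simp add: distrib_left)
  qed
  then show "\<exists>M. \<forall>n. real n ^ k * dd n (x - y) \<le> M" by blast
qed

lemma Hra_scale: assumes "x \<in> H_ra J e" shows "cscale J c x \<in> H_ra J e"
  unfolding Hra_iff
proof
  fix k
  obtain M where M: "\<forall>n. real n ^ k * dd n x \<le> M" using assms Hra_iff by metis
  have "real n ^ k * dd n (cscale J c x) \<le> cmod c * M" for n
    using mult_left_mono[OF M[THEN spec, of n], of "cmod c"] by (simp add: dd_cscale algebra_simps)
  then show "\<exists>M. \<forall>n. real n ^ k * dd n (cscale J c x) \<le> M" by blast
qed

lemma qsem_add: assumes "x \<in> H_ra J e" "y \<in> H_ra J e"
  shows "qsem J e k (x + y) \<le> qsem J e k x + qsem J e k y"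
proof (rule qsem_least)
  fix n
  have "real n ^ k * dd n (x + y) \<le> real n ^ k * (dd n x + dd n y)"
    by (rule mult_left_mono[OF dd_add nk_nonneg])
  then show "real n ^ k * dd n (x + y) \<le> qsem J e k x + qsem J e k y"
    using qsem_upper[OF assms(1), of n k] qsem_upper[OF assms(2), of n k] by (simp add: distrib_left)
qed

lemma qsem_diff: assumes "x \<in> H_ra J e" "y \<in> H_ra J e"
  shows "qsem J e k (x - y) \<le> qsem J e k x + qsem J e k y"
proof (rule qsem_least)
  fix n
  have "real n ^ k * dd n (x - y) \<le> real n ^ k * (dd n x + dd n y)"
    by (rule mult_left_mono[OF dd_diff nk_nonneg])
  then show "real n ^ k * dd n (x - y) \<le> qsem J e k x + qsem J e k y"
    using qsem_upper[OF assms(1), of n k] qsem_upper[OF assms(2), of n k] by (simp add: distrib_left)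
qed

lemma qsem_scale: assumes x: "x \<in> H_ra J e" shows "qsem J e k (cscale J c x) = cmod c * qsem J e k x"
proof (rule antisym)
  show "qsem J e k (cscale J c x) \<le> cmod c * qsem J e k x"
  proof (rule qsem_least)
    fix n
    show "real n ^ k * dd n (cscale J c x) \<le> cmod c * qsem J e k x"
      using mult_left_mono[OF qsem_upper[OF x, of n k], of "cmod c"] by (simp add: dd_cscale algebra_simps)
  qed
next
  have cx: "cscale J c x \<in> H_ra J e" by (rule Hra_scale[OF x])
  show "cmod c * qsem J e k x \<le> qsem J e k (cscale J c x)"
  proof (cases "c = 0")
    case True then show ?thesis using qsem_nonneg[OF cx] by simp
  next
    case False
    then have c: "0 < cmod c" by simp
    have "qsem J e k x \<le> qsem J e k (cscale J c x) / cmod c"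
    proof (rule qsem_least)
      fix n
      have "real n ^ k * dd n x = (real n ^ k * dd n (cscale J c x)) / cmod c"
        using c by (simp add: dd_cscale field_simps)
      also have "\<dots> \<le> qsem J e k (cscale J c x) / cmod c"
        by (rule divide_right_mono[OF qsem_upper[OF cx]]) simp
      finally show "real n ^ k * dd n x \<le> qsem J e k (cscale J c x) / cmod c" .
    qed
    then show ?thesis using c by (simp add: field_simps)
  qed
qed

lemma qsem_zero: "qsem J e k 0 = 0"
  unfolding qsem_dd dd_zero by simp

lemma seminorm_q: "seminorm_on (H_ra J e) (cscale J) (qsem J e k)"
  unfolding seminorm_on_def using Hra_0 Hra_add qsem_add Hra_scale qsem_scale by blast

lemma separating: assumes "x \<in> H_ra J e" "\<forall>k. qsem J e k x = 0" shows "x = 0"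
proof -
  have "norm x \<le> 0" using qsem_upper[OF assms(1), of 0 0] assms(2) by (simp add: dd_0)
  then show ?thesis by simp
qed

lemma complete:
  assumes X: "\<forall>n. X n \<in> H_ra J e"
    and C: "\<forall>k. \<forall>\<epsilon>>0. \<exists>N. \<forall>m\<ge>N. \<forall>n\<ge>N. qsem J e k (X m - X n) < \<epsilon>"
  shows "\<exists>y\<in>H_ra J e. \<forall>k. (\<lambda>n. qsem J e k (X n - y)) \<longlonglongrightarrow> 0"
proof -
  have Xd: "X m - X n \<in> H_ra J e" for m n using X Hra_diff by blast
  have "Cauchy X" unfolding Cauchy_def
  proof (intro allI impI)
    fix \<epsilon> :: real assume "0 < \<epsilon>"
    then obtain N where N: "\<forall>m\<ge>N. \<forall>n\<ge>N. qsem J e 0 (X m - X n) < \<epsilon>" using C by blast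
    have "dist (X m) (X n) < \<epsilon>" if "m \<ge> N" "n \<ge> N" for m n
      using qsem_upper[OF Xd[of m n], of 0 0] N that by (simp add: dd_0 dist_norm, meson le_less_trans)
    then show "\<exists>M. \<forall>m\<ge>M. \<forall>n\<ge>M. dist (X m) (X n) < \<epsilon>" by blast
  qed
  then obtain y where lim: "X \<longlonglongrightarrow> y" using Cauchy_convergent_iff convergent_def by blast
  have key: "\<exists>N. \<forall>n\<ge>N. \<forall>m. real m ^ k * dd m (X n - y) \<le> \<epsilon>" if "\<epsilon> > 0" for k \<epsilon>
  proof -
    obtain N where N: "\<forall>m\<ge>N. \<forall>n\<ge>N. qsem J e k (X m - X n) < \<epsilon>" using C \<open>\<epsilon> > 0\<close> by blast
    have "real m ^ k * dd m (X n - y) \<le> \<epsilon>" if n: "n \<ge> N" for n m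
    proof -
      have l: "(\<lambda>p. real m ^ k * dd m (X n - X p)) \<longlonglongrightarrow> real m ^ k * dd m (X n - y)"
        unfolding dd_def by (intro tendsto_intros lim)
      show ?thesis
      proof (rule LIMSEQ_le_const2[OF l])
        show "\<exists>N. \<forall>p\<ge>N. real m ^ k * dd m (X n - X p) \<le> \<epsilon>"
          using N n qsem_upper[OF Xd] by (meson less_imp_le order_trans)
      qed
    qed
    then show ?thesis by blast
  qed
  have yH: "y \<in> H_ra J e" unfolding Hra_iff
  proof
    fix k
    obtain N where N: "\<forall>n\<ge>N. \<forall>m. real m ^ k * dd m (X n - y) \<le> 1" using key[of 1 k] by auto
    obtain M where M: "\<forall>m. real m ^ k * dd m (X N) \<le> M" using X Hra_iff by metis
    have "real m ^ k * dd m y \<le> M + 1" for m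
    proof -
      have "dd m y = dd m (X N - (X N - y))" by simp
      also have "\<dots> \<le> dd m (X N) + dd m (X N - y)" by (rule dd_diff)
      finally have "real m ^ k * dd m y \<le> real m ^ k * (dd m (X N) + dd m (X N - y))"
        by (rule mult_left_mono[OF _ nk_nonneg])
      then show ?thesis using M[THEN spec, of m] N[rule_format, of N m] by (simp add: distrib_left)
    qed
    then show "\<exists>M. \<forall>m. real m ^ k * dd m y \<le> M" by blast
  qed
  have "(\<lambda>n. qsem J e k (X n - y)) \<longlonglongrightarrow> 0" for k
  proof (rule LIMSEQ_I)
    fix r :: real assume r: "0 < r"
    then obtain N where N: "\<forall>n\<ge>N. \<forall>m. real m ^ k * dd m (X n - y) \<le> r/2" using key[of "r/2" k] by auto
    have "norm (qsem J e k (X n - y) - 0) < r" if "n \<ge> N" for n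
    proof -
      have "qsem J e k (X n - y) \<le> r/2" using N that by (intro qsem_least) auto
      moreover have "0 \<le> qsem J e k (X n - y)" using Hra_diff[OF X[rule_format] yH] qsem_nonneg by blast
      ultimately show ?thesis using r by simp
    qed
    then show "\<exists>N. \<forall>n\<ge>N. norm (qsem J e k (X n - y) - 0) < r" by blast
  qed
  then show ?thesis using yH by blast
qed

lemma frechet: "frechet_seminorms (H_ra J e) (cscale J) (qsem J e)"
  unfolding frechet_seminorms_def using seminorm_q separating complete by blast

end


lemma sn_cont:
  fixes f :: "'v::ab_group_add \<Rightarrow> 'w::ab_group_add"
  assumes fS: "\<And>x. x \<in> S \<Longrightarrow> f x \<in> T"
    and dS: "\<And>x y. x \<in> S \<Longrightarrow> y \<in> S \<Longrightarrow> x - y \<in> S"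
    and dT: "\<And>x y. x \<in> T \<Longrightarrow> y \<in> T \<Longrightarrow> x - y \<in> T"
    and fd: "\<And>x y. x \<in> S \<Longrightarrow> y \<in> S \<Longrightarrow> f (x - y) = f x - f y"
    and tri: "\<And>k a b. a \<in> T \<Longrightarrow> b \<in> T \<Longrightarrow> q k (a + b) \<le> q k a + q k b"
    and p0: "\<And>k. p k 0 = 0" and q0: "\<And>k. q k 0 = 0"
    and bnd: "\<And>k. \<exists>k1 k2 C. C > 0 \<and> (\<forall>u\<in>S. q k (f u) \<le> C * (p k1 u + p k2 u))"
  shows "continuous_map (seminorm_topology S p) (seminorm_topology T q) f"
proof -
  have tS: "topspace (seminorm_topology S p) = S"
  proof
    show "topspace (seminorm_topology S p) \<subseteq> S"
      unfolding seminorm_topology_def topology_generated_by_topspace by blast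
    show "S \<subseteq> topspace (seminorm_topology S p)"
    proof
      fix x assume x: "x \<in> S"
      have "x \<in> {y \<in> S. p 0 (y - x) < 1}" using x p0 by simp
      moreover have "{y \<in> S. p 0 (y - x) < 1} \<in> {{y \<in> S. p k (y - x) < r} | k x r. x \<in> S \<and> r > 0}"
        unfolding mem_Collect_eq using x by (intro exI[of _ 0] exI[of _ x] exI[of _ "1::real"]) simp
      ultimately show "x \<in> topspace (seminorm_topology S p)"
        unfolding seminorm_topology_def topology_generated_by_topspace by blast
    qed
  qed
  show ?thesis
    unfolding seminorm_topology_def[of T q]
  proof (rule continuous_on_generated_topo)
    show "f ` topspace (seminorm_topology S p) \<subseteq> \<Union> {{y \<in> T. q k (y - x) < r} | k x r. x \<in> T \<and> r > 0}"
    proof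
      fix z assume "z \<in> f ` topspace (seminorm_topology S p)"
      then have z: "z \<in> T" using tS fS by blast
      have "z \<in> {y \<in> T. q 0 (y - z) < 1}" using z q0 by simp
      moreover have "{y \<in> T. q 0 (y - z) < 1} \<in> {{y \<in> T. q k (y - x) < r} | k x r. x \<in> T \<and> r > 0}"
        unfolding mem_Collect_eq using z by (intro exI[of _ 0] exI[of _ z] exI[of _ "1::real"]) simp
      ultimately show "z \<in> \<Union> {{y \<in> T. q k (y - x) < r} | k x r. x \<in> T \<and> r > 0}" by blast
    qed
  next
    fix U assume "U \<in> {{y \<in> T. q k (y - x) < r} | k x r. x \<in> T \<and> r > 0}"
    then obtain k w r where U: "U = {y \<in> T. q k (y - w) < r}" and w: "w \<in> T" and r: "r > 0" by blast
    have V: "f -` U \<inter> topspace (seminorm_topology S p) = {x \<in> S. q k (f x - w) < r}"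
      using U tS fS by auto
    show "openin (seminorm_topology S p) (f -` U \<inter> topspace (seminorm_topology S p))"
      unfolding V
    proof (subst openin_subopen, intro ballI)
      fix x0 assume "x0 \<in> {x \<in> S. q k (f x - w) < r}"
      then have x0: "x0 \<in> S" "q k (f x0 - w) < r" by auto
      define \<delta> where "\<delta> = r - q k (f x0 - w)"
      have \<delta>: "\<delta> > 0" using x0 by (simp add: \<delta>_def)
      obtain k1 k2 C where C: "C > 0" "\<forall>u\<in>S. q k (f u) \<le> C * (p k1 u + p k2 u)" using bnd by blast
      define W where "W = {y \<in> S. p k1 (y - x0) < \<delta>/(2*C)} \<inter> {y \<in> S. p k2 (y - x0) < \<delta>/(2*C)}"
      have "openin (seminorm_topology S p) W"
        unfolding W_def seminorm_topology_def
      proof (intro openin_Int topology_generated_by_Basis; unfold mem_Collect_eq)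
        show "\<exists>k x r. {y \<in> S. p k1 (y - x0) < \<delta> / (2 * C)} = {y \<in> S. p k (y - x) < r} \<and> x \<in> S \<and> 0 < r"
          using x0 \<delta> C by (intro exI[of _ k1] exI[of _ x0] exI[of _ "\<delta> / (2 * C)"]) simp
        show "\<exists>k x r. {y \<in> S. p k2 (y - x0) < \<delta> / (2 * C)} = {y \<in> S. p k (y - x) < r} \<and> x \<in> S \<and> 0 < r"
          using x0 \<delta> C by (intro exI[of _ k2] exI[of _ x0] exI[of _ "\<delta> / (2 * C)"]) simp
      qed
      moreover have "x0 \<in> W" unfolding W_def using x0 \<delta> C p0 by simp
      moreover have "W \<subseteq> {x \<in> S. q k (f x - w) < r}"
      proof
        fix y assume y: "y \<in> W"
        then have yS: "y \<in> S" and py: "p k1 (y - x0) < \<delta>/(2*C)" "p k2 (y - x0) < \<delta>/(2*C)"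
          by (auto simp: W_def)
        have eq: "f y - w = f (y - x0) + (f x0 - w)" using fd[OF yS x0(1)] by simp
        have "q k (f y - w) \<le> q k (f (y - x0)) + q k (f x0 - w)"
          unfolding eq by (rule tri) (use fd[OF yS x0(1)] dT fS yS x0 w in auto)
        also have "q k (f (y - x0)) \<le> C * (p k1 (y - x0) + p k2 (y - x0))"
          using C(2) dS[OF yS x0(1)] by blast
        also have "C * (p k1 (y - x0) + p k2 (y - x0)) < C * (\<delta>/(2*C) + \<delta>/(2*C))"
          using py C(1) by (intro mult_strict_left_mono) auto
        also have "C * (\<delta>/(2*C) + \<delta>/(2*C)) = \<delta>" using C(1) by (simp add: field_simps)
        finally show "y \<in> {x \<in> S. q k (f x - w) < r}" using yS by (simp add: \<delta>_def)
      qed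
      ultimately show "\<exists>T. openin (seminorm_topology S p) T \<and> x0 \<in> T \<and> T \<subseteq> {x \<in> S. q k (f x - w) < r}"
        by blast
    qed
  qed
qed

context hb begin

lemma fc_inj: assumes "x \<in> H_ra J e" "y \<in> H_ra J e" "fourier_coeffs J e x = fourier_coeffs J e y"
  shows "x = y"
proof -
  define z where "z = x - y"
  have cz: "cf n z = 0" for n unfolding cf_def z_def fc_diff using assms(3) by simp
  have dz: "dd n z = dd 0 z" for n
  proof (induction n)
    case 0 then show ?case by simp
  next
    case (Suc n)
    have "(dd (Suc n) z)\<^sup>2 = (dd n z)\<^sup>2" using dd_step[of n z] cz[of n] by simp
    then have "dd (Suc n) z = dd n z" using dd_nonneg by (simp add: power2_eq_iff_nonneg)
    then show ?case using Suc by simp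
  qed
  have "(\<lambda>N. dd N z) = (\<lambda>N. dd 0 z)" by (rule ext) (rule dz)
  then have "(\<lambda>N. dd N z) \<longlonglongrightarrow> dd 0 z" by simp
  then have "dd 0 z = 0" using dd_lim[of z] LIMSEQ_unique by blast
  then show ?thesis by (simp add: dd_0 z_def)
qed

lemma inv_sq_bound: assumes n: "1 \<le> n"
  shows "(\<Sum>m\<in>{n..<n+N}. 1 / (real m)\<^sup>2) \<le> 2 / real n - 2 / real (n + N)"
proof (induction N)
  case 0 then show ?case by simp
next
  case (Suc N)
  define M where "M = real (n + N)"
  have M1: "1 \<le> M" using n by (simp add: M_def)
  have e1: "2 / M - 2 / (M + 1) = (1/M) * (2 / (M + 1))" using M1 by (simp add: field_simps)
  have e2: "1 / M \<le> 2 / (M + 1)" using M1 by (simp add: field_simps)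
  have "1 / M\<^sup>2 = (1/M) * (1/M)" by (simp add: power2_eq_square)
  also have "\<dots> \<le> (1/M) * (2 / (M + 1))" using M1 e2 by (intro mult_left_mono) auto
  finally have "1 / M\<^sup>2 \<le> 2 / M - 2 / (M + 1)" using e1 by simp
  then show ?case using Suc by (simp add: M_def add.commute)
qed

definition "Ssum a N = (\<Sum>m<N. Re (a m) *\<^sub>R e m + Im (a m) *\<^sub>R J (e m))"

lemma Ssum_e: "inner (Ssum a N) (e n) = (if n < N then Re (a n) else 0)"
proof -
  have "inner (Ssum a N) (e n) = (\<Sum>m<N. if m = n then Re (a n) else 0)"
    unfolding Ssum_def inner_sum_left by (rule sum.cong) (auto simp: inner_add_left e_orth1)
  then show ?thesis by simp
qed
lemma Ssum_Je: "inner (Ssum a N) (J (e n)) = (if n < N then Im (a n) else 0)"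
proof -
  have "inner (Ssum a N) (J (e n)) = (\<Sum>m<N. if m = n then Im (a n) else 0)"
    unfolding Ssum_def inner_sum_left by (rule sum.cong) (auto simp: inner_add_left e_orth1)
  then show ?thesis by simp
qed
lemma Ssum_in: "Ssum a N \<in> Lspan J e N"
  unfolding Ssum_def Lspan_eq
  by (intro span_sum span_add span_scale span_base) auto
lemma P_Ssum: assumes "n \<le> N" shows "P n (Ssum a N) = Ssum a n"
  unfolding P_def Ssum_def[of a n]
proof (rule sum.cong)
  fix m assume "m \<in> {..<n}"
  then have "m < N" using assms by simp
  then show "inner (Ssum a N) (e m) *\<^sub>R e m + inner (Ssum a N) (J (e m)) *\<^sub>R J (e m) =
      Re (a m) *\<^sub>R e m + Im (a m) *\<^sub>R J (e m)" by (simp only: Ssum_e Ssum_Je if_True)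
qed simp
lemma cf_Ssum: "m < N \<Longrightarrow> cf m (Ssum a N) = cmod (a m)"
  unfolding cf_def fourier_coeffs_def cinner_def Ssum_e Ssum_Je by (simp only: if_True complex_surj)

lemma Ssum_dist: assumes B: "\<forall>n. real n * cmod (a n) \<le> B" and n: "1 \<le> n"
  shows "(norm (Ssum a (n + j) - Ssum a n))\<^sup>2 \<le> 2 * B\<^sup>2 / real n"
proof -
  have "(norm (Ssum a (n + j) - Ssum a n))\<^sup>2 = (dd n (Ssum a (n + j)))\<^sup>2"
    by (simp add: dd_eq P_Ssum)
  also have "\<dots> = (dd (n + j) (Ssum a (n + j)))\<^sup>2 + (\<Sum>m\<in>{n..<n+j}. (cf m (Ssum a (n + j)))\<^sup>2)"
    by (rule dd_tel)
  also have "dd (n + j) (Ssum a (n + j)) = 0" unfolding dd_def by (rule infdist_zero[OF Ssum_in])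
  also have "(\<Sum>m\<in>{n..<n+j}. (cf m (Ssum a (n + j)))\<^sup>2) = (\<Sum>m\<in>{n..<n+j}. (cmod (a m))\<^sup>2)"
    by (rule sum.cong) (auto simp: cf_Ssum)
  also have "\<dots> \<le> (\<Sum>m\<in>{n..<n+j}. B\<^sup>2 * (1 / (real m)\<^sup>2))"
  proof (rule sum_mono)
    fix m assume m: "m \<in> {n..<n+j}"
    then have m1: "1 \<le> real m" using n by auto
    have "(cmod (a m))\<^sup>2 = (real m * cmod (a m))\<^sup>2 / (real m)\<^sup>2" using m1 by (simp add: field_simps)
    also have "\<dots> \<le> B\<^sup>2 / (real m)\<^sup>2" using B by (intro divide_right_mono power_mono) auto
    finally show "(cmod (a m))\<^sup>2 \<le> B\<^sup>2 * (1 / (real m)\<^sup>2)" by simp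
  qed
  also have "\<dots> = B\<^sup>2 * (\<Sum>m\<in>{n..<n+j}. 1 / (real m)\<^sup>2)" by (simp add: sum_distrib_left)
  also have "\<dots> \<le> B\<^sup>2 * (2 / real n)"
  proof -
    have "0 \<le> 2 / real (n + j)" by simp
    then have "(\<Sum>m\<in>{n..<n+j}. 1 / (real m)\<^sup>2) \<le> 2 / real n" using inv_sq_bound[OF n, of j] by linarith
    then show ?thesis by (intro mult_left_mono) auto
  qed
  finally show ?thesis by (simp add: mult.commute)
qed

lemma fc_surj: assumes a: "a \<in> rapid_seq" shows "\<exists>x\<in>H_ra J e. fourier_coeffs J e x = a"
proof -
  obtain B where B: "\<forall>n. real n ^ 1 * cmod (a n) \<le> B" using a rapid_iff by blast
  then have B': "\<forall>n. real n * cmod (a n) \<le> B" by simp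
  have cd: "dist (Ssum a m) (Ssum a n) < \<epsilon>" if "\<epsilon> > 0" "1 \<le> n" "n \<le> m" "2 * B\<^sup>2 / real n < \<epsilon>\<^sup>2" for m n \<epsilon>
  proof -
    obtain j where j: "m = n + j" using \<open>n \<le> m\<close> le_Suc_ex by blast
    have "(dist (Ssum a m) (Ssum a n))\<^sup>2 < \<epsilon>\<^sup>2"
      unfolding j dist_norm using Ssum_dist[OF B' \<open>1 \<le> n\<close>, of j] that(4) by linarith
    then show ?thesis by (rule power_less_imp_less_base) (use \<open>\<epsilon> > 0\<close> in simp)
  qed
  have "Cauchy (Ssum a)" unfolding Cauchy_def
  proof (intro allI impI)
    fix \<epsilon> :: real assume \<epsilon>: "0 < \<epsilon>"
    obtain N0 :: nat where N0: "2 * B\<^sup>2 / \<epsilon>\<^sup>2 < real N0" using reals_Archimedean2 by blast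
    define N where "N = Suc N0"
    have e2: "0 < \<epsilon>\<^sup>2" using \<epsilon> by simp
    have small: "2 * B\<^sup>2 / real n < \<epsilon>\<^sup>2" if "n \<ge> N" for n
    proof -
      have n0: "0 < real n" using that by (simp add: N_def)
      have "2 * B\<^sup>2 / \<epsilon>\<^sup>2 < real n" using N0 that by (simp add: N_def)
      then have "2 * B\<^sup>2 < real n * \<epsilon>\<^sup>2" by (simp add: pos_divide_less_eq[OF e2])
      then show ?thesis by (simp add: pos_divide_less_eq[OF n0] mult.commute)
    qed
    have "dist (Ssum a m) (Ssum a n) < \<epsilon>" if "m \<ge> N" "n \<ge> N" for m n
    proof (cases "n \<le> m")
      case True
      have "1 \<le> n" using that(2) by (simp add: N_def)
      then show ?thesis using cd[OF \<epsilon> _ True small[OF that(2)]] by blast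
    next
      case False
      then have mn: "m \<le> n" by simp
      have "1 \<le> m" using that(1) by (simp add: N_def)
      then have "dist (Ssum a n) (Ssum a m) < \<epsilon>" using cd[OF \<epsilon> _ mn small[OF that(1)]] by blast
      then show ?thesis by (simp add: dist_commute)
    qed
    then show "\<exists>M. \<forall>m\<ge>M. \<forall>n\<ge>M. dist (Ssum a m) (Ssum a n) < \<epsilon>" by blast
  qed
  then obtain x where lim: "Ssum a \<longlonglongrightarrow> x" using Cauchy_convergent_iff convergent_def by blast
  have c1: "inner x (e n) = Re (a n)" for n
  proof -
    have "(\<lambda>N. inner (Ssum a (N + Suc n)) (e n)) \<longlonglongrightarrow> inner x (e n)"
      using LIMSEQ_ignore_initial_segment[OF lim, of "Suc n"] by (intro tendsto_intros)
    moreover have "(\<lambda>N. inner (Ssum a (N + Suc n)) (e n)) = (\<lambda>N. Re (a n))" by (simp add: Ssum_e)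
    ultimately show ?thesis using LIMSEQ_unique tendsto_const by metis
  qed
  have c2: "inner x (J (e n)) = Im (a n)" for n
  proof -
    have "(\<lambda>N. inner (Ssum a (N + Suc n)) (J (e n))) \<longlonglongrightarrow> inner x (J (e n))"
      using LIMSEQ_ignore_initial_segment[OF lim, of "Suc n"] by (intro tendsto_intros)
    moreover have "(\<lambda>N. inner (Ssum a (N + Suc n)) (J (e n))) = (\<lambda>N. Im (a n))" by (simp add: Ssum_Je)
    ultimately show ?thesis using LIMSEQ_unique tendsto_const by metis
  qed
  have fx: "fourier_coeffs J e x = a"
    by (rule ext) (simp add: fourier_coeffs_def cinner_def c1 c2 complex_eq_iff)
  then have "x \<in> H_ra J e" using char a by simp
  then show ?thesis using fx by blast
qed

lemma fc_bij: "bij_betw (fourier_coeffs J e) (H_ra J e) rapid_seq"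
  unfolding bij_betw_def
proof
  show "inj_on (fourier_coeffs J e) (H_ra J e)" by (rule inj_onI) (rule fc_inj)
  show "fourier_coeffs J e ` H_ra J e = rapid_seq"
  proof
    show "fourier_coeffs J e ` H_ra J e \<subseteq> rapid_seq" using char by auto
    show "rapid_seq \<subseteq> fourier_coeffs J e ` H_ra J e"
    proof
      fix a assume "a \<in> rapid_seq"
      then obtain x where "x \<in> H_ra J e" "fourier_coeffs J e x = a" using fc_surj by blast
      then show "a \<in> fourier_coeffs J e ` H_ra J e" by (metis image_eqI)
    qed
  qed
qed

end


lemma sn_topspace:
  assumes p0: "\<And>k. p k 0 = 0"
  shows "topspace (seminorm_topology S p) = S"
proof
  show "topspace (seminorm_topology S p) \<subseteq> S"
    unfolding seminorm_topology_def topology_generated_by_topspace by blast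
  show "S \<subseteq> topspace (seminorm_topology S p)"
  proof
    fix x assume x: "x \<in> S"
    have "x \<in> {y \<in> S. p 0 (y - x) < 1}" using x p0 by simp
    moreover have "{y \<in> S. p 0 (y - x) < 1} \<in> {{y \<in> S. p k (y - x) < r} | k x r. x \<in> S \<and> r > 0}"
      unfolding mem_Collect_eq using x by (intro exI[of _ 0] exI[of _ x] exI[of _ "1::real"]) simp
    ultimately show "x \<in> topspace (seminorm_topology S p)"
      unfolding seminorm_topology_def topology_generated_by_topspace by blast
  qed
qed

context hb begin

lemma ssem_zero: "ssem k 0 = 0" by (simp add: ssem_def)

lemma ssem_add: assumes "a \<in> rapid_seq" "b \<in> rapid_seq"
  shows "ssem k (a + b) \<le> ssem k a + ssem k b"
proof (rule ssem_least)
  fix n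
  have "real n ^ k * cmod ((a + b) n) \<le> real n ^ k * (cmod (a n) + cmod (b n))"
    by (intro mult_left_mono) (auto simp: norm_triangle_ineq)
  then show "real n ^ k * cmod ((a + b) n) \<le> ssem k a + ssem k b"
    using ssem_upper[OF assms(1), of n k] ssem_upper[OF assms(2), of n k] by (simp add: distrib_left)
qed

lemma homeo: "homeomorphic_map (seminorm_topology (H_ra J e) (qsem J e))
                        (seminorm_topology rapid_seq ssem) (fourier_coeffs J e)"
proof -
  define f where "f = fourier_coeffs J e"
  define g where "g = inv_into (H_ra J e) f"
  have bij: "bij_betw f (H_ra J e) rapid_seq" using fc_bij by (simp add: f_def)
  have g1: "g (f x) = x" if "x \<in> H_ra J e" for x
    using bij that unfolding g_def bij_betw_def by (simp add: inv_into_f_f)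
  have g2: "f (g a) = a" "g a \<in> H_ra J e" if "a \<in> rapid_seq" for a
    using bij that unfolding g_def bij_betw_def by (auto simp: f_inv_into_f inv_into_into)
  have fH: "f x \<in> rapid_seq" if "x \<in> H_ra J e" for x using that char by (simp add: f_def)
  have rdiff: "a - b \<in> rapid_seq" if "a \<in> rapid_seq" "b \<in> rapid_seq" for a b
  proof -
    have "a - b = f (g a - g b)" using g2 that by (simp add: f_def fc_diff)
    then show ?thesis using fH Hra_diff g2 that by metis
  qed
  have c1: "continuous_map (seminorm_topology (H_ra J e) (qsem J e)) (seminorm_topology rapid_seq ssem) f"
  proof (rule sn_cont)
    show "f x \<in> rapid_seq" if "x \<in> H_ra J e" for x using fH that .
    show "x - y \<in> H_ra J e" if "x \<in> H_ra J e" "y \<in> H_ra J e" for x y using Hra_diff that .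
    show "x - y \<in> rapid_seq" if "x \<in> rapid_seq" "y \<in> rapid_seq" for x y using rdiff that .
    show "f (x - y) = f x - f y" for x y by (simp add: f_def fc_diff)
    show "ssem k (a + b) \<le> ssem k a + ssem k b" if "a \<in> rapid_seq" "b \<in> rapid_seq" for k a b
      using ssem_add that .
    show "qsem J e k 0 = 0" for k by (rule qsem_zero)
    show "ssem k 0 = 0" for k by (rule ssem_zero)
    show "\<exists>k1 k2 C. C > 0 \<and> (\<forall>u\<in>H_ra J e. ssem k (f u) \<le> C * (qsem J e k1 u + qsem J e k2 u))" for k
    proof (intro exI conjI ballI)
      fix u assume u: "u \<in> H_ra J e"
      show "ssem k (f u) \<le> 1 * (qsem J e k u + qsem J e k u)"
        using ssem_le_qsem[OF u, of k] qsem_nonneg[OF u, of k] by (simp add: f_def)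
    qed simp
  qed
  have c2: "continuous_map (seminorm_topology rapid_seq ssem) (seminorm_topology (H_ra J e) (qsem J e)) g"
  proof (rule sn_cont)
    show "g x \<in> H_ra J e" if "x \<in> rapid_seq" for x using g2 that by blast
    show "x - y \<in> rapid_seq" if "x \<in> rapid_seq" "y \<in> rapid_seq" for x y using rdiff that .
    show "x - y \<in> H_ra J e" if "x \<in> H_ra J e" "y \<in> H_ra J e" for x y using Hra_diff that .
    show "g (x - y) = g x - g y" if "x \<in> rapid_seq" "y \<in> rapid_seq" for x y
    proof -
      have "f (g x - g y) = x - y" using g2 that by (simp add: f_def fc_diff)
      then have "g (x - y) = g (f (g x - g y))" by simp
      also have "\<dots> = g x - g y" using g1 g2 Hra_diff that by metis
      finally show ?thesis .
    qed
    show "qsem J e k (a + b) \<le> qsem J e k a + qsem J e k b" if "a \<in> H_ra J e" "b \<in> H_ra J e" for k a b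
      using qsem_add that .
    show "ssem k 0 = 0" for k by (rule ssem_zero)
    show "qsem J e k 0 = 0" for k by (rule qsem_zero)
    show "\<exists>k1 k2 C. C > 0 \<and> (\<forall>u\<in>rapid_seq. qsem J e k (g u) \<le> C * (ssem k1 u + ssem k2 u))" for k
    proof (intro exI conjI ballI)
      fix u assume u: "u \<in> rapid_seq"
      have "qsem J e k (g u) \<le> ssem k u + 2 * ssem (Suc k) u"
        using qsem_le_ssem[OF g2(2)[OF u], of k] g2(1)[OF u] by (simp add: f_def)
      then show "qsem J e k (g u) \<le> 2 * (ssem k u + ssem (Suc k) u)"
        using ssem_nonneg[OF u, of k] by simp
    qed simp
  qed
  have t1: "topspace (seminorm_topology (H_ra J e) (qsem J e)) = H_ra J e"
    by (rule sn_topspace) (rule qsem_zero)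
  have t2: "topspace (seminorm_topology rapid_seq ssem) = rapid_seq"
    by (rule sn_topspace) (rule ssem_zero)
  have "homeomorphic_maps (seminorm_topology (H_ra J e) (qsem J e)) (seminorm_topology rapid_seq ssem) f g"
    unfolding homeomorphic_maps_def t1 t2 using c1 c2 g1 g2 by blast
  then show ?thesis unfolding f_def homeomorphic_map_maps by blast
qed

end

theorem theorem2p2:
  fixes J :: "'a::{real_inner, complete_space} \<Rightarrow> 'a" and e :: "nat \<Rightarrow> 'a"
  assumes "complex_structure J"
    and "orthonormal_basis J e"
  shows "frechet_seminorms (H_ra J e) (cscale J) (qsem J e)
    \<and> (\<forall>x. x \<in> H_ra J e \<longleftrightarrow> fourier_coeffs J e x \<in> rapid_seq)
    \<and> bij_betw (fourier_coeffs J e) (H_ra J e) rapid_seq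
    \<and> (\<forall>x\<in>H_ra J e. \<forall>y\<in>H_ra J e. fourier_coeffs J e (x + y) = fourier_coeffs J e x + fourier_coeffs J e y)
    \<and> (\<forall>c. \<forall>x\<in>H_ra J e. fourier_coeffs J e (cscale J c x) = seq_scale c (fourier_coeffs J e x))
    \<and> homeomorphic_map (seminorm_topology (H_ra J e) (qsem J e))
                        (seminorm_topology rapid_seq ssem) (fourier_coeffs J e)"
proof -
  interpret hb J e by (rule hb.intro[OF assms])
  show ?thesis using frechet char fc_bij fc_add fc_scale homeo by blast
qed

end
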